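(* Let $\rho\in(0,1)$, let $N_1,N_2$ be positive integers, $n=N_1+N_2$, and let $X_0(1)>X_0(2)>\cdots>X_0(n)$ be integers. Put $Y^{(1)}=(X_0(1),\dots,X_0(N_1))$, $Y^{(2)}=(X_0(N_1+1),\dots,X_0(N_1+N_2))$ and $X=(X_0(1),\dots,X_0(n))$. Then for every $0\le k\le N_1-1$ and every $z\in\mathbb{Z}$, $$h^{n,X}_{k+N_2}(0,z)=\sum_{z_3\in\mathbb{Z}}\big(Q^{N_2}(z_3,z)-G^{Y^{(2)}}_{0,N_2}(z_3,z)\big)\,h^{N_1,Y^{(1)}}_k(0,z_3).$$
   Context: $Q(x,y)=(1-\rho)^{x-y-1}\rho\,\mathbf{1}_{x>y}$ on $\mathbb{Z}\times\mathbb{Z}$, $Q^m$ its $m$-th matrix power. For $f:\mathbb{Z}\to\mathbb{R}$ let $(Q^* )^{-1}f(z)=\frac1\rho f(z-1)-\frac{1-\rho}{\rho}f(z)$. For $m\ge1$, integers $Y(1)>\cdots>Y(m)$, and $0\le k<m$, $h^{m,Y}_k(l,z)$ ($0\le l\le k$, $z\in\mathbb{Z}$) is the unique solution of: $(Q^* )^{-1}h^{m,Y}_k(l,\cdot)(z)=h^{m,Y}_k(l+1,z)$ for $l<k$; $h^{m,Y}_k(k,z)=\rho(1-\rho)^{Y(m-k)-z-1}$; $h^{m,Y}_k(l,Y(m-l))=0$ for $l<k$. Further $G^{Y}_{0,m}(z_1,z_2)=\sum_{k=0}^{m-1}\frac{1-\rho}{\rho}Q^{m-k}(z_1,Y(m-k))\,h^{m,Y}_k(0,z_2)$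 for $z_1,z_2\in\mathbb{Z}$. *)

theory Defs
  imports "HOL-Analysis.Analysis"
begin

definition Qk :: "real \<Rightarrow> int \<Rightarrow> int \<Rightarrow> real" where
  "Qk \<rho> x y = (if x > y then \<rho> * (1 - \<rho>) ^ nat (x - y - 1) else 0)"

fun Qpow :: "real \<Rightarrow> nat \<Rightarrow> int \<Rightarrow> int \<Rightarrow> real" where
  "Qpow \<rho> 0 x y = (if x = y then 1 else 0)"
| "Qpow \<rho> (Suc m) x y = (\<Sum>\<^sub>\<infinity>w\<in>(UNIV::int set). Qk \<rho> x w * Qpow \<rho> m w y)"

definition invQstar :: "real \<Rightarrow> (int \<Rightarrow> real) \<Rightarrow> int \<Rightarrow> real" where
  "invQstar \<rho> f z = f (z - 1) / \<rho> - (1 - \<rho>) / \<rho> * f z"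

text \<open>h^{m,Y}_k(l,z) for 0 <= l <= k: the unique solution of the stated system
  (sequences Y are 1-indexed: Y(1) > ... > Y(m)). Values for l > k are normalised to 0
  so that the description singles out one function.\<close>
definition hfun :: "real \<Rightarrow> nat \<Rightarrow> (nat \<Rightarrow> int) \<Rightarrow> nat \<Rightarrow> nat \<Rightarrow> int \<Rightarrow> real" where
  "hfun \<rho> m Y k = (THE h :: nat \<Rightarrow> int \<Rightarrow> real.
      (\<forall>l z. k < l \<longrightarrow> h l z = 0)
    \<and> (\<forall>l z. l < k \<longrightarrow> invQstar \<rho> (h l) z = h (Suc l) z)
    \<and> (\<forall>z. h k z = \<rho> * (1 - \<rho>) powi (Y (m - k) - z - 1))
    \<and> (\<forall>l. l < k \<longrightarrow> h l (Y (m - l)) = 0))"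

definition Gfun :: "real \<Rightarrow> (nat \<Rightarrow> int) \<Rightarrow> nat \<Rightarrow> int \<Rightarrow> int \<Rightarrow> real" where
  "Gfun \<rho> Y m z1 z2 = (\<Sum>k<m. (1 - \<rho>) / \<rho> * Qpow \<rho> (m - k) z1 (Y (m - k)) * hfun \<rho> m Y k 0 z2)"

end

theory Submission
  imports Defs
begin


definition Tk :: "real \<Rightarrow> int \<Rightarrow> (int \<Rightarrow> real) \<Rightarrow> int \<Rightarrow> real" where
  "Tk \<rho> a f z = (\<Sum>w\<in>{z<..a}. \<rho> * (1-\<rho>) powi (w-z-1) * f w)
               - (\<Sum>w\<in>{a<..z}. \<rho> * (1-\<rho>) powi (w-z-1) * f w)"

fun Tl :: "real \<Rightarrow> int list \<Rightarrow> (int \<Rightarrow> real) \<Rightarrow> int \<Rightarrow> real" where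
  "Tl \<rho> [] f = f"
| "Tl \<rho> (a#L) f = Tk \<rho> a (Tl \<rho> L f)"

definition ee :: "real \<Rightarrow> int \<Rightarrow> int \<Rightarrow> real" where
  "ee \<rho> a z = \<rho> * (1-\<rho>) powi (a - z - 1)"

lemma powi_shift:
  assumes "(x::real) \<noteq> 0"
  shows "x powi (w - z) = x * x powi (w - z - 1)"
  using power_int_add_1'[of x "w - z - 1"] assms by simp

lemma Tk_at: "Tk \<rho> a f a = 0"
  by (simp add: Tk_def)

lemma Tk_inv:
  assumes "0 < \<rho>" "\<rho> < 1"
  shows "invQstar \<rho> (Tk \<rho> a f) z = f z"
proof (cases "z \<le> a")
  case True
  have s1: "{z-1<..a} = insert z {z<..a}" using True by auto
  have s2: "{a<..z-1} = {}" "{a<..z} = {}" using True by auto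
  define S where "S = (\<Sum>w\<in>{z<..a}. \<rho> * (1-\<rho>) powi (w-z-1) * f w)"
  have "(\<Sum>w\<in>{z<..a}. \<rho> * (1-\<rho>) powi (w-(z-1)-1) * f w) = (1-\<rho>) * S"
    unfolding S_def sum_distrib_left
  proof (rule sum.cong[OF refl])
    fix w
    have "(1-\<rho>) powi (w - z) = (1-\<rho>) * (1-\<rho>) powi (w - z - 1)"
      by (rule powi_shift) (use assms in simp)
    then show "\<rho> * (1-\<rho>) powi (w-(z-1)-1) * f w = (1-\<rho>) * (\<rho> * (1-\<rho>) powi (w-z-1) * f w)"
      by simp
  qed
  then have "Tk \<rho> a f (z-1) = \<rho> * f z + (1-\<rho>) * S"
    unfolding Tk_def s1 s2 by simp
  moreover have "Tk \<rho> a f z = S" unfolding Tk_def S_def s2 by simp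
  ultimately show ?thesis unfolding invQstar_def using assms
    by (simp add: field_simps)
next
  case False
  have s1: "{a<..z} = insert z {a<..z-1}" using False by auto
  have s2: "{z-1<..a} = {}" "{z<..a} = {}" using False by auto
  define S where "S = (\<Sum>w\<in>{a<..z-1}. \<rho> * (1-\<rho>) powi (w-z-1) * f w)"
  have "(\<Sum>w\<in>{a<..z-1}. \<rho> * (1-\<rho>) powi (w-(z-1)-1) * f w) = (1-\<rho>) * S"
    unfolding S_def sum_distrib_left
  proof (rule sum.cong[OF refl])
    fix w
    have "(1-\<rho>) powi (w - z) = (1-\<rho>) * (1-\<rho>) powi (w - z - 1)"
      by (rule powi_shift) (use assms in simp)
    then show "\<rho> * (1-\<rho>) powi (w-(z-1)-1) * f w = (1-\<rho>) * (\<rho> * (1-\<rho>) powi (w-z-1) * f w)"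
      by simp
  qed
  then have "Tk \<rho> a f (z-1) = - (1-\<rho>) * S"
    unfolding Tk_def s1 s2 by (simp add: algebra_simps)
  moreover have "Tk \<rho> a f z = - (\<rho> * (1-\<rho>) powi (-1) * f z + S)"
    unfolding Tk_def S_def s1 s2 by simp
  ultimately show ?thesis unfolding invQstar_def using assms
    by (simp add: field_simps power_int_minus)
qed

lemma invQ_unique:
  assumes "0 < \<rho>" "\<rho> < 1"
    and eq: "\<And>z. invQstar \<rho> f z = invQstar \<rho> g z" and at: "f a = g a"
  shows "f = g"
proof
  fix i
  define d where "d z = f z - g z" for z
  have rec: "d (z-1) = (1-\<rho>) * d z" for z
    using eq[of z] assms unfolding invQstar_def d_def by (simp add: field_simps)
  have "d i = 0"
  proof (induction i rule: int_induct[where k=a])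
    case base then show ?case using at by (simp add: d_def)
  next
    case (step1 i)
    then show ?case using rec[of "i+1"] assms by simp
  next
    case (step2 i)
    then show ?case using rec[of i] by simp
  qed
  then show "f i = g i" by (simp add: d_def)
qed

lemma hfun_explicit:
  assumes "0 < \<rho>" "\<rho> < 1"
  shows "hfun \<rho> m Y k = (\<lambda>l z. if l \<le> k then Tl \<rho> (map (\<lambda>i. Y(m-i)) [l..<k]) (ee \<rho> (Y(m-k))) z else 0)"
    (is "_ = ?H")
  unfolding hfun_def
proof (rule the_equality)
  show "(\<forall>l z. k < l \<longrightarrow> ?H l z = 0)
    \<and> (\<forall>l z. l < k \<longrightarrow> invQstar \<rho> (?H l) z = ?H (Suc l) z)
    \<and> (\<forall>z. ?H k z = \<rho> * (1 - \<rho>) powi (Y (m - k) - z - 1))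
    \<and> (\<forall>l. l < k \<longrightarrow> ?H l (Y (m - l)) = 0)"
  proof (intro conjI allI impI)
    fix l z assume "l < k"
    then show "invQstar \<rho> (?H l) z = ?H (Suc l) z"
      using Tk_inv[OF assms] by (simp add: upt_conv_Cons)
  next
    fix l assume "l < k"
    then show "?H l (Y (m - l)) = 0" by (simp add: upt_conv_Cons Tk_at)
  qed (auto simp: ee_def)
next
  fix h assume P: "(\<forall>l z. k < l \<longrightarrow> h l z = 0)
    \<and> (\<forall>l z. l < k \<longrightarrow> invQstar \<rho> (h l) z = h (Suc l) z)
    \<and> (\<forall>z. h k z = \<rho> * (1 - \<rho>) powi (Y (m - k) - z - 1))
    \<and> (\<forall>l. l < k \<longrightarrow> h l (Y (m - l)) = 0)"
  have H_inv: "l < k \<Longrightarrow> invQstar \<rho> (?H l) z = ?H (Suc l) z" for l z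
    using Tk_inv[OF assms] by (simp add: upt_conv_Cons)
  have H_at: "l < k \<Longrightarrow> ?H l (Y (m - l)) = 0" for l by (simp add: upt_conv_Cons Tk_at)
  have main: "j \<le> k \<Longrightarrow> h (k - j) = ?H (k - j)" for j
  proof (induction j)
    case 0 then show ?case using P by (auto simp: ee_def)
  next
    case (Suc j)
    define l where "l = k - Suc j"
    have lk: "l < k" "Suc l = k - j" using Suc.prems by (auto simp: l_def)
    have "h l = ?H l"
    proof (rule invQ_unique[OF assms, where a="Y (m - l)"])
      fix z
      have "invQstar \<rho> (h l) z = h (Suc l) z" using P lk by blast
      also have "\<dots> = ?H (Suc l) z" using Suc lk by simp
      also have "\<dots> = invQstar \<rho> (?H l) z" using H_inv[OF lk(1)] by simp
      finally show "invQstar \<rho> (h l) z = invQstar \<rho> (?H l) z" .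
    next
      show "h l (Y (m - l)) = ?H l (Y (m - l))" using P lk H_at by auto
    qed
    then show ?case by (simp add: l_def)
  qed
  show "h = ?H"
  proof (rule ext)
    fix l show "h l = ?H l"
    proof (cases "l \<le> k")
      case True then show ?thesis using main[of "k - l"] by simp
    next
      case False then show ?thesis using P by auto
    qed
  qed
qed



lemma Tk_local:
  assumes "\<And>v. -R \<le> v \<Longrightarrow> v \<le> R \<Longrightarrow> f v = g v" "\<bar>a\<bar> \<le> R" "\<bar>z\<bar> \<le> R"
  shows "Tk \<rho> a f z = Tk \<rho> a g z"
  unfolding Tk_def
  by (intro arg_cong2[where f="(-)"] sum.cong refl) (use assms in auto)

lemma Tk_lin_sum:
  "Tk \<rho> a (\<lambda>v. \<Sum>w\<in>S. \<alpha> w * g w v) z = (\<Sum>w\<in>S. \<alpha> w * Tk \<rho> a (g w) z)"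
proof -
  have h: "(\<Sum>v\<in>A. c v * (\<Sum>w\<in>S. \<alpha> w * g w v)) = (\<Sum>w\<in>S. \<alpha> w * (\<Sum>v\<in>A. c v * g w v))"
    for A and c :: "int \<Rightarrow> real"
    unfolding sum_distrib_left by (subst sum.swap) (simp add: mult_ac)
  show ?thesis unfolding Tk_def h by (simp add: sum_subtractf right_diff_distrib)
qed

lemma Tk_diff:
  "Tk \<rho> a (\<lambda>v. f v - c * g v) z = Tk \<rho> a f z - c * Tk \<rho> a g z"
  unfolding Tk_def
  by (simp add: sum_subtractf right_diff_distrib sum_distrib_left algebra_simps)

lemma Tl_diff:
  "Tl \<rho> L (\<lambda>v. f v - c * g v) z = Tl \<rho> L f z - c * Tl \<rho> L g z"
proof (induction L arbitrary: z)
  case Nil then show ?case by simp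
next
  case (Cons a L)
  have "Tl \<rho> (a#L) (\<lambda>v. f v - c * g v) z = Tk \<rho> a (\<lambda>v. Tl \<rho> L f v - c * Tl \<rho> L g v) z"
  proof -
    have "Tl \<rho> L (\<lambda>v. f v - c * g v) = (\<lambda>v. Tl \<rho> L f v - c * Tl \<rho> L g v)"
      using Cons.IH by (rule ext)
    then show ?thesis by simp
  qed
  also have "\<dots> = Tl \<rho> (a#L) f z - c * Tl \<rho> (a#L) g z"
    by (subst Tk_diff) simp
  finally show ?case .
qed

lemma Tl_append: "Tl \<rho> (A @ B) f = Tl \<rho> A (Tl \<rho> B f)"
  by (induction A) auto

definition Kc :: "real \<Rightarrow> int list \<Rightarrow> int \<Rightarrow> int \<Rightarrow> real" where
  "Kc \<rho> L w z = Tl \<rho> L (\<lambda>v. if v = w then 1 else 0) z"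

lemma abs_le_sum_list: "a \<in> set L \<Longrightarrow> \<bar>a::int\<bar> \<le> sum_list (map abs L)"
proof (induction L)
  case Nil then show ?case by simp
next
  case (Cons b L)
  have "0 \<le> sum_list (map abs L)" by (induction L) auto
  then show ?case using Cons by auto
qed

lemma Tl_repr:
  assumes "\<forall>a\<in>set L. \<bar>a\<bar> \<le> R" "\<bar>z\<bar> \<le> R"
  shows "Tl \<rho> L f z = (\<Sum>w\<in>{-R..R}. Kc \<rho> L w z * f w)"
  using assms
proof (induction L arbitrary: z)
  case Nil
  have "(\<Sum>w\<in>{-R..R}. Kc \<rho> [] w z * f w) = (\<Sum>w\<in>{-R..R}. if w = z then f w else 0)"
    by (rule sum.cong) (auto simp: Kc_def)
  also have "\<dots> = f z" using Nil by (simp add: abs_le_iff)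
  finally show ?case by simp
next
  case (Cons a L)
  have "Tl \<rho> (a#L) f z = Tk \<rho> a (Tl \<rho> L f) z" by simp
  also have "\<dots> = Tk \<rho> a (\<lambda>v. \<Sum>w\<in>{-R..R}. f w * Kc \<rho> L w v) z"
    by (rule Tk_local[where R=R]) (use Cons in \<open>auto simp: mult.commute\<close>)
  also have "\<dots> = (\<Sum>w\<in>{-R..R}. f w * Tk \<rho> a (Kc \<rho> L w) z)"
    by (rule Tk_lin_sum)
  also have "\<dots> = (\<Sum>w\<in>{-R..R}. Kc \<rho> (a#L) w z * f w)"
    by (rule sum.cong) (auto simp: Kc_def[abs_def] mult.commute)
  finally show ?case .
qed

lemma Kc_supp:
  assumes "\<forall>a\<in>set L. \<bar>a\<bar> \<le> R" "\<bar>z\<bar> \<le> R" "w \<notin> {-R..R}"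
  shows "Kc \<rho> L w z = 0"
proof -
  have "Kc \<rho> L w z = Tl \<rho> L (\<lambda>v. if v = w then 1 else 0) z" by (simp add: Kc_def)
  also have "\<dots> = (\<Sum>u\<in>{-R..R}. Kc \<rho> L u z * (if u = w then 1 else 0))"
    by (rule Tl_repr) (use assms in auto)
  also have "\<dots> = 0" using assms(3) by (intro sum.neutral) auto
  finally show ?thesis .
qed

lemma Tk_delta:
  assumes "0 < \<rho>" "\<rho> < 1"
  shows "Tk \<rho> a (\<lambda>v. if v = w then 1 else 0) u
     = Qk \<rho> w u - (1-\<rho>)/\<rho> * Qk \<rho> w a * ee \<rho> a u"
proof -
  have L: "Tk \<rho> a (\<lambda>v. if v = w then 1 else 0) u
     = \<rho> * (1-\<rho>) powi (w-u-1) * ((if u < w \<and> w \<le> a then 1 else 0) - (if a < w \<and> w \<le> u then 1 else 0))"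
    unfolding Tk_def by (simp add: if_distrib sum.delta' algebra_simps cong: if_cong) 
  have q: "Qk \<rho> w y = (if w > y then \<rho> * (1-\<rho>) powi (w - y - 1) else 0)" for y
    unfolding Qk_def by (auto simp: power_int_def)
  have e: "(1-\<rho>)/\<rho> * (\<rho> * (1-\<rho>) powi (w - a - 1)) * ee \<rho> a u = \<rho> * (1-\<rho>) powi (w-u-1)"
  proof -
    have "(1-\<rho>) * (1-\<rho>) powi (w - a - 1) * (1-\<rho>) powi (a - u - 1) = (1-\<rho>) powi (w-u-1)"
    proof -
      have "(1-\<rho>) powi (w - a - 1) * (1-\<rho>) powi (a - u - 1) = (1-\<rho>) powi ((w-a-1) + (a-u-1))"
        by (rule power_int_add[symmetric]) (use assms in simp)
      also have "(w-a-1) + (a-u-1) = (w-u-1) - 1" by simp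
      finally show ?thesis using assms power_int_add_1'[of "1-\<rho>" "w-u-1-1"] by simp
    qed
    moreover have "(1-\<rho>)/\<rho> * (\<rho> * P1) * (\<rho> * P2) = \<rho> * ((1-\<rho>) * P1 * P2)" for P1 P2 :: real
      using assms by (simp add: field_simps)
    ultimately show ?thesis unfolding ee_def by metis
  qed
  show ?thesis unfolding L q using e by auto
qed

lemma Qpow_supp: "u < y \<Longrightarrow> Qpow \<rho> j u y = 0"
proof (induction j arbitrary: u)
  case 0 then show ?case by simp
next
  case (Suc j)
  have "Qk \<rho> u w * Qpow \<rho> j w y = 0" for w
    using Suc by (cases "w < u") (auto simp: Qk_def)
  then have "(\<lambda>w. Qk \<rho> u w * Qpow \<rho> j w y) = (\<lambda>_. 0)" by auto
  then show ?case by simp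
qed

lemma Qpow_Suc_sum:
  assumes "-R \<le> y" "w \<le> R"
  shows "(\<Sum>u\<in>{-R..R}. Qk \<rho> w u * Qpow \<rho> j u y) = Qpow \<rho> (Suc j) w y"
proof -
  have "Qpow \<rho> (Suc j) w y = infsum (\<lambda>u. Qk \<rho> w u * Qpow \<rho> j u y) UNIV" by simp
  also have "\<dots> = infsum (\<lambda>u. Qk \<rho> w u * Qpow \<rho> j u y) {-R..R}"
  proof (rule infsum_cong_neutral)
    fix u assume "u \<in> UNIV - {-R..R}"
    then have "u < y \<or> \<not> u < w" using assms by auto
    then show "Qk \<rho> w u * Qpow \<rho> j u y = 0"
      using Qpow_supp by (auto simp: Qk_def)
  qed auto
  finally show ?thesis by simp
qed

lemma Qpow_1: "Qpow \<rho> (Suc 0) w y = Qk \<rho> w y"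
proof -
  have "Qpow \<rho> (Suc 0) w y = infsum (\<lambda>u. if u = y then Qk \<rho> w y else 0) UNIV"
    by (simp add: if_distrib cong: if_cong)
  also have "\<dots> = Qk \<rho> w y"
    by (subst infsum_cong_neutral[where T="{y}" and g="\<lambda>_. Qk \<rho> w y"]) auto
  finally show ?thesis .
qed



lemma hfun0:
  assumes "0 < \<rho>" "\<rho> < 1"
  shows "hfun \<rho> m Y k 0 = Tl \<rho> (map (\<lambda>i. Y(m-i)) [0..<k]) (ee \<rho> (Y(m-k)))"
  using hfun_explicit[OF assms] by simp

lemma kernel:
  assumes "0 < \<rho>" "\<rho> < 1"
  shows "Kc \<rho> (map (\<lambda>l. Y(m-l)) [0..<m]) w z = Qpow \<rho> m w z - Gfun \<rho> Y m w z"
proof (induction m arbitrary: Y w z)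
  case 0
  then show ?case by (simp add: Kc_def Gfun_def)
next
  case (Suc m)
  define Y' where "Y' i = Y (Suc i)" for i
  define L' where "L' = map (\<lambda>l. Y(Suc m - l)) [0..<m]"
  define c where "c = (1-\<rho>)/\<rho>"
  have L'eq: "L' = map (\<lambda>l. Y'(m-l)) [0..<m]"
    unfolding L'_def Y'_def by (intro map_cong) (auto simp: Suc_diff_le)
  have Lsplit: "map (\<lambda>l. Y(Suc m-l)) [0..<Suc m] = L' @ [Y 1]"
    by (simp add: L'_def)
  define R where "R = \<bar>w\<bar> + \<bar>z\<bar> + sum_list (map abs L')"
  have R0: "0 \<le> sum_list (map abs L')" by (induction L') auto
  have inL: "\<forall>a\<in>set L'. \<bar>a\<bar> \<le> R" using abs_le_sum_list R0 unfolding R_def by force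
  have zR: "\<bar>z\<bar> \<le> R" using R0 unfolding R_def by simp
  have wR: "\<bar>w\<bar> \<le> R" using R0 unfolding R_def by simp
  have "Kc \<rho> (map (\<lambda>l. Y(Suc m-l)) [0..<Suc m]) w z
      = Tl \<rho> L' (Tk \<rho> (Y 1) (\<lambda>v. if v = w then 1 else 0)) z"
    unfolding Kc_def Lsplit Tl_append by simp
  also have "Tk \<rho> (Y 1) (\<lambda>v. if v = w then 1 else 0) = (\<lambda>u. Qk \<rho> w u - c * Qk \<rho> w (Y 1) * ee \<rho> (Y 1) u)"
    using Tk_delta[OF assms] by (auto simp: c_def)
  also have "Tl \<rho> L' (\<lambda>u. Qk \<rho> w u - c * Qk \<rho> w (Y 1) * ee \<rho> (Y 1) u) z
      = Tl \<rho> L' (Qk \<rho> w) z - (c * Qk \<rho> w (Y 1)) * Tl \<rho> L' (ee \<rho> (Y 1)) z"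
    using Tl_diff[of \<rho> L' "Qk \<rho> w" "c * Qk \<rho> w (Y 1)" "ee \<rho> (Y 1)" z] by (simp add: mult.assoc)
  also have "Tl \<rho> L' (Qk \<rho> w) z = (\<Sum>u\<in>{-R..R}. Kc \<rho> L' u z * Qk \<rho> w u)"
    by (rule Tl_repr[OF inL zR])
  also have "\<dots> = (\<Sum>u\<in>{-R..R}. Qk \<rho> w u * Qpow \<rho> m u z) - (\<Sum>u\<in>{-R..R}. Qk \<rho> w u * Gfun \<rho> Y' m u z)"
    unfolding L'eq Suc.IH sum_subtractf[symmetric] by (rule sum.cong) (auto simp: algebra_simps)
  also have "(\<Sum>u\<in>{-R..R}. Qk \<rho> w u * Qpow \<rho> m u z) = Qpow \<rho> (Suc m) w z"
    by (rule Qpow_Suc_sum) (use zR wR in auto)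
  also have "(\<Sum>u\<in>{-R..R}. Qk \<rho> w u * Gfun \<rho> Y' m u z)
      = (\<Sum>k<m. c * (\<Sum>u\<in>{-R..R}. Qk \<rho> w u * Qpow \<rho> (m - k) u (Y' (m - k))) * hfun \<rho> m Y' k 0 z)"
    unfolding Gfun_def c_def sum_distrib_left sum_distrib_right
    by (subst sum.swap) (simp add: mult_ac)
  also have "\<dots> = (\<Sum>k<m. c * Qpow \<rho> (Suc m - k) w (Y (Suc m - k)) * hfun \<rho> (Suc m) Y k 0 z)"
  proof (rule sum.cong[OF refl])
    fix k assume k: "k \<in> {..<m}"
    have yin: "Y' (m - k) \<in> set L'" unfolding L'eq using k by auto
    have e1: "Suc m - k = Suc (m - k)" using k by auto
    have e2: "Y (Suc m - k) = Y' (m - k)" using k by (auto simp: Y'_def Suc_diff_le)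
    have S: "(\<Sum>u\<in>{-R..R}. Qk \<rho> w u * Qpow \<rho> (m - k) u (Y' (m - k))) = Qpow \<rho> (Suc m - k) w (Y (Suc m - k))"
      unfolding e1 e2[unfolded e1]
      by (rule Qpow_Suc_sum) (use inL yin wR in auto)
    have hf: "hfun \<rho> m Y' k 0 = hfun \<rho> (Suc m) Y k 0"
      unfolding hfun0[OF assms] using k
      by (intro arg_cong2[where f="Tl \<rho>"] map_cong) (auto simp: Y'_def Suc_diff_le)
    show "c * (\<Sum>u\<in>{-R..R}. Qk \<rho> w u * Qpow \<rho> (m - k) u (Y' (m - k))) * hfun \<rho> m Y' k 0 z
        = c * Qpow \<rho> (Suc m - k) w (Y (Suc m - k)) * hfun \<rho> (Suc m) Y k 0 z"
      unfolding S hf ..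
  qed
  also have "Tl \<rho> L' (ee \<rho> (Y 1)) z = hfun \<rho> (Suc m) Y m 0 z"
    unfolding hfun0[OF assms] L'_def by simp
  finally have calc: "Kc \<rho> (map (\<lambda>l. Y(Suc m-l)) [0..<Suc m]) w z
    = Qpow \<rho> (Suc m) w z - (\<Sum>k<m. c * Qpow \<rho> (Suc m - k) w (Y (Suc m - k)) * hfun \<rho> (Suc m) Y k 0 z)
      - c * Qk \<rho> w (Y 1) * hfun \<rho> (Suc m) Y m 0 z" .
  have G: "Gfun \<rho> Y (Suc m) w z = (\<Sum>k<m. c * Qpow \<rho> (Suc m - k) w (Y (Suc m - k)) * hfun \<rho> (Suc m) Y k 0 z)
      + c * Qk \<rho> w (Y 1) * hfun \<rho> (Suc m) Y m 0 z"
    unfolding Gfun_def c_def by (simp del: Qpow.simps add: Qpow_1)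
  show ?case unfolding calc G by (rule diff_diff_eq)
qed



theorem lemma2p5:
  fixes \<rho> :: real and N1 N2 k :: nat and X0 :: "nat \<Rightarrow> int" and z :: int
  assumes "0 < \<rho>" and "\<rho> < 1"
    and "1 \<le> N1" and "1 \<le> N2"
    and "\<And>i j. 1 \<le> i \<Longrightarrow> i < j \<Longrightarrow> j \<le> N1 + N2 \<Longrightarrow> X0 j < X0 i"
    and "k < N1"
  shows "((\<lambda>z3. (Qpow \<rho> N2 z3 z - Gfun \<rho> (\<lambda>i. X0 (N1 + i)) N2 z3 z)
                 * hfun \<rho> N1 (\<lambda>i. if i \<le> N1 then X0 i else 0) k 0 z3)
          has_sum hfun \<rho> (N1 + N2) X0 (k + N2) 0 z) UNIV"
proof -
  define Y1 where "Y1 = (\<lambda>i. if i \<le> N1 then X0 i else 0)"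
  define Y2 where "Y2 = (\<lambda>i. X0 (N1 + i))"
  define A where "A = map (\<lambda>l. Y2 (N2 - l)) [0..<N2]"
  define g where "g = hfun \<rho> N1 Y1 k 0"
  have ab: "0 < \<rho>" "\<rho> < 1" using assms by auto
  have split: "[0..<k+N2] = [0..<N2] @ [N2..<N2+k]"
    using upt_add_eq_append[of 0 N2 k] by (simp add: add.commute)
  have mA: "map (\<lambda>i. X0 (N1 + N2 - i)) [0..<N2] = A"
    unfolding A_def Y2_def by (intro map_cong) auto
  have mB: "map (\<lambda>i. X0 (N1 + N2 - i)) [N2..<N2+k] = map (\<lambda>i. Y1 (N1 - i)) [0..<k]"
    by (rule nth_equalityI) (auto simp: Y1_def)
  have eY: "X0 (N1 + N2 - (k + N2)) = Y1 (N1 - k)" by (simp add: Y1_def)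
  have H: "hfun \<rho> (N1 + N2) X0 (k + N2) 0 z = Tl \<rho> A g z"
    unfolding hfun0[OF ab] split map_append Tl_append mA mB eY g_def by simp
  define R where "R = \<bar>z\<bar> + sum_list (map abs A)"
  have R0: "0 \<le> sum_list (map abs A)" by (induction A) auto
  have inL: "\<forall>a\<in>set A. \<bar>a\<bar> \<le> R" using abs_le_sum_list R0 unfolding R_def by force
  have zR: "\<bar>z\<bar> \<le> R" using R0 unfolding R_def by simp
  have K: "Kc \<rho> A w z = Qpow \<rho> N2 w z - Gfun \<rho> Y2 N2 w z" for w
    unfolding A_def by (rule kernel[OF ab])
  have "((\<lambda>w. Kc \<rho> A w z * g w) has_sum Tl \<rho> A g z) UNIV"
  proof (rule has_sum_finite_neutralI[where B="{-R..R}"])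
    show "Tl \<rho> A g z = (\<Sum>w\<in>{-R..R}. Kc \<rho> A w z * g w)" by (rule Tl_repr[OF inL zR])
  next
    fix w assume "w \<in> UNIV - {-R..R}"
    then show "Kc \<rho> A w z * g w = 0" using Kc_supp[OF inL zR] by simp
  qed auto
  then show ?thesis unfolding H K g_def Y1_def Y2_def .
qed

end
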